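(* Let $\mathcal{M}=(S,A,\delta)$ be a finite fuzzy transition system and let $\gamma=1$. Then $d^1_f(s,t)\in\Theta_{\mathcal{M}}$ for all $s,t\in S$.
   Context: A fuzzy set on a finite set $X$ is a map $\mu:X\to[0,1]$; $\mathcal{F}(X)$ is the set of fuzzy sets on $X$ and $\mathcal{P}(X)$ the power set; $\mu(U)=\max_{x\in U}\mu(x)$. A fuzzy transition system is $\mathcal{M}=(S,A,\delta)$ with $S,A$ finite and $\delta:S\times A\to\mathcal{P}(\mathcal{F}(S))$, each $\delta(s,a)$ finite. $\Theta_{\mathcal{M}}$ is the set of all membership degrees $\mu(u)$ with $u\in S$ and $\mu\in\delta(s,a)$ for some $s\in S,a\in A$, together with $0$ and $1$. $\mathcal{D}(S)$ is the set of pseudo-ultrametrics $d:S\times S\to[0,1]$ ($d(x,x)=0$, symmetric, $d(x,z)\le\max(d(x,y),d(y,z))$), ordered pointwise by $\preceq$. Lifting: for $\mu,\eta\in\mathcal{F}(S)$, $\hat d(\mu,\eta)=1$ if $\mu(S)\ne\eta(S)$, and otherwise $\hat d(\mu,\eta)$ is the minimum of $\max_{u,v}\min(d(u,v),x_{uv})$ over all $x_{uv}\ge0$ with $\max_v x_{uv}=\mu(u)$ for all $u$ and $\max_u x_{uv}=\eta(v)$ for all $v$. For $\mu$ and finite $Z\subseteq\mathcal{F}(S)$: $\hat d(\mu,Z)=\min_{\eta\in Z}\hat d(\mu,\eta)$ if $Z\neq\emptyset$, else $1$. Hausdorff distance: $H_{\hat d}(\emptyset,\emptyset)=0$, otherwise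 $H_{\hat d}(Y,Z)=\max\big(\max_{\mu\in Y}\hat d(\mu,Z),\max_{\eta\in Z}\hat d(\eta,Y)\big)$. For a discounting factor $\gamma\in(0,1]$, the functional $\Delta:\mathcal{D}(S)\to\mathcal{D}(S)$ is $\Delta(d)(s,t)=\gamma\cdot\max_{a\in A}H_{\hat d}(\delta(s,a),\delta(t,a))$; it is monotone, and $d^\gamma_f$ denotes its least fixpoint. *)

theory Defs
  imports Complex_Main
begin

definition fuzzy_set :: "('s \<Rightarrow> real) \<Rightarrow> bool" where
  "fuzzy_set \<mu> \<longleftrightarrow> (\<forall>u. 0 \<le> \<mu> u \<and> \<mu> u \<le> 1)"

definition fts :: "('s::finite \<Rightarrow> 'a::finite \<Rightarrow> ('s \<Rightarrow> real) set) \<Rightarrow> bool" where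
  "fts \<delta> \<longleftrightarrow> (\<forall>s a. finite (\<delta> s a) \<and> (\<forall>\<mu>\<in>\<delta> s a. fuzzy_set \<mu>))"

definition height :: "('s::finite \<Rightarrow> real) \<Rightarrow> real" where
  "height \<mu> = Max (range \<mu>)"

definition Theta :: "('s \<Rightarrow> 'a \<Rightarrow> ('s \<Rightarrow> real) set) \<Rightarrow> real set" where
  "Theta \<delta> = {\<mu> u | u \<mu> s a. \<mu> \<in> \<delta> s a} \<union> {0, 1}"

definition pum :: "('s \<Rightarrow> 's \<Rightarrow> real) \<Rightarrow> bool" where
  "pum d \<longleftrightarrow> (\<forall>x y. 0 \<le> d x y \<and> d x y \<le> 1) \<and> (\<forall>x. d x x = 0)
     \<and> (\<forall>x y. d x y = d y x) \<and> (\<forall>x y z. d x z \<le> max (d x y) (d y z))"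

text \<open>Lifting of d to fuzzy sets (the minimum is attained; we write it as Inf).\<close>
definition lift :: "('s::finite \<Rightarrow> 's \<Rightarrow> real) \<Rightarrow> ('s \<Rightarrow> real) \<Rightarrow> ('s \<Rightarrow> real) \<Rightarrow> real" where
  "lift d \<mu> \<eta> = (if height \<mu> \<noteq> height \<eta> then 1 else
     Inf {Max ((\<lambda>(u, v). min (d u v) (x u v)) ` UNIV) | x.
            (\<forall>u v. 0 \<le> x u v) \<and> (\<forall>u. Max (range (x u)) = \<mu> u)
            \<and> (\<forall>v. Max (range (\<lambda>u. x u v)) = \<eta> v)})"

definition lift_set :: "('s::finite \<Rightarrow> 's \<Rightarrow> real) \<Rightarrow> ('s \<Rightarrow> real) \<Rightarrow> ('s \<Rightarrow> real) set \<Rightarrow> real" where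
  "lift_set d \<mu> Z = (if Z = {} then 1 else Min ((\<lambda>\<eta>. lift d \<mu> \<eta>) ` Z))"

definition max0 :: "real set \<Rightarrow> real" where
  "max0 A = (if A = {} then 0 else Max A)"

definition hausdorff :: "('s::finite \<Rightarrow> 's \<Rightarrow> real) \<Rightarrow> ('s \<Rightarrow> real) set \<Rightarrow> ('s \<Rightarrow> real) set \<Rightarrow> real" where
  "hausdorff d Y Z = (if Y = {} \<and> Z = {} then 0 else
     max (max0 ((\<lambda>\<mu>. lift_set d \<mu> Z) ` Y)) (max0 ((\<lambda>\<eta>. lift_set d \<eta> Y) ` Z)))"

definition Delta :: "real \<Rightarrow> ('s::finite \<Rightarrow> 'a::finite \<Rightarrow> ('s \<Rightarrow> real) set)
    \<Rightarrow> ('s \<Rightarrow> 's \<Rightarrow> real) \<Rightarrow> ('s \<Rightarrow> 's \<Rightarrow> real)" where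
  "Delta \<gamma> \<delta> d s t = \<gamma> * Max (range (\<lambda>a. hausdorff d (\<delta> s a) (\<delta> t a)))"

definition is_least_fix :: "real \<Rightarrow> ('s::finite \<Rightarrow> 'a::finite \<Rightarrow> ('s \<Rightarrow> real) set)
    \<Rightarrow> ('s \<Rightarrow> 's \<Rightarrow> real) \<Rightarrow> bool" where
  "is_least_fix \<gamma> \<delta> d \<longleftrightarrow> pum d \<and> Delta \<gamma> \<delta> d = d \<and>
     (\<forall>d'. pum d' \<and> Delta \<gamma> \<delta> d' = d' \<longrightarrow> (\<forall>s t. d s t \<le> d' s t))"

definition dfix :: "real \<Rightarrow> ('s::finite \<Rightarrow> 'a::finite \<Rightarrow> ('s \<Rightarrow> real) set) \<Rightarrow> ('s \<Rightarrow> 's \<Rightarrow> real)" where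
  "dfix \<gamma> \<delta> = (THE d. is_least_fix \<gamma> \<delta> d)"

end

theory Submission
  imports Defs "HOL-Library.FuncSet"
begin


definition cpl :: "('s::finite \<Rightarrow> real) \<Rightarrow> ('s \<Rightarrow> real) \<Rightarrow> ('s \<Rightarrow> 's \<Rightarrow> real) set" where
  "cpl \<mu> \<eta> = {x. (\<forall>u v. 0 \<le> x u v) \<and> (\<forall>u. Max (range (x u)) = \<mu> u)
            \<and> (\<forall>v. Max (range (\<lambda>u. x u v)) = \<eta> v)}"

definition val :: "('s::finite \<Rightarrow> 's \<Rightarrow> real) \<Rightarrow> ('s \<Rightarrow> 's \<Rightarrow> real) \<Rightarrow> real" where
  "val d x = Max ((\<lambda>(u, v). min (d u v) (x u v)) ` UNIV)"

lemma lift_alt: "lift d \<mu> \<eta> = (if height \<mu> \<noteq> height \<eta> then 1 else Inf (val d ` cpl \<mu> \<eta>))"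
  unfolding lift_def cpl_def val_def by (auto simp: image_def intro!: arg_cong[where f=Inf])

lemma val_ge: "min (d u v) (x u v) \<le> val d x"
  unfolding val_def by (rule Max_ge) auto

lemma val_le_iff: "val d x \<le> c \<longleftrightarrow> (\<forall>u v. min (d u v) (x u v) \<le> c)"
  unfolding val_def by (subst Max_le_iff) auto

lemma val_in: "\<exists>u v. val d x = min (d u v) (x u v)"
proof -
  have "val d x \<in> (\<lambda>(u, v). min (d u v) (x u v)) ` UNIV" unfolding val_def by (rule Max_in) auto
  thus ?thesis by auto
qed

lemma max_range_ge: "(f::'b::finite \<Rightarrow> real) v \<le> Max (range f)" by (rule Max_ge) auto

lemma max_range_in: "\<exists>v. Max (range (f::'b::finite \<Rightarrow> real)) = f v"
proof -
  have "Max (range f) \<in> range f" by (rule Max_in) auto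
  thus ?thesis by (metis imageE)
qed

lemma max_range_eqI: "(\<And>v. (f::'b::finite \<Rightarrow> real) v \<le> c) \<Longrightarrow> f w = c \<Longrightarrow> Max (range f) = c"
  by (rule Max_eqI) auto

lemma cpl_row_le: "x \<in> cpl \<mu> \<eta> \<Longrightarrow> x u v \<le> \<mu> u"
  unfolding cpl_def using max_range_ge[of "x u" v] by auto
lemma cpl_col_le: "x \<in> cpl \<mu> \<eta> \<Longrightarrow> x u v \<le> \<eta> v"
  unfolding cpl_def using max_range_ge[of "\<lambda>u. x u v" u] by auto
lemma cpl_row_att: "x \<in> cpl \<mu> \<eta> \<Longrightarrow> \<exists>v. x u v = \<mu> u"
  unfolding cpl_def using max_range_in[of "x u"] by auto
lemma cpl_col_att: "x \<in> cpl \<mu> \<eta> \<Longrightarrow> \<exists>u. x u v = \<eta> v"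
  unfolding cpl_def using max_range_in[of "\<lambda>u. x u v"] by auto
lemma cpl_nonneg: "x \<in> cpl \<mu> \<eta> \<Longrightarrow> 0 \<le> x u v"
  unfolding cpl_def by auto

lemma cplI:
  assumes a1: "\<And>u v. 0 \<le> x u v" and a2: "\<And>u v. x u v \<le> \<mu> u" and a3: "\<And>u v. x u v \<le> \<eta> v"
    and a4: "\<And>u. \<exists>v. x u v = \<mu> u" and a5: "\<And>v. \<exists>u. x u v = \<eta> v"
  shows "x \<in> cpl \<mu> \<eta>"
  unfolding cpl_def
proof (intro CollectI conjI allI)
  fix u v show "0 \<le> x u v" by (rule a1)
next
  fix u obtain v where "x u v = \<mu> u" using a4 by blast
  thus "Max (range (x u)) = \<mu> u" by (intro max_range_eqI[where w=v]) (use a2 in auto)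
next
  fix v obtain u where "x u v = \<eta> v" using a5 by blast
  thus "Max (range (\<lambda>u. x u v)) = \<eta> v" by (intro max_range_eqI[where w=u]) (use a3 in auto)
qed

lemma height_ge: "\<mu> u \<le> height \<mu>"
  unfolding height_def by (rule max_range_ge)
lemma height_att: "\<exists>u. \<mu> u = height \<mu>"
  unfolding height_def using max_range_in[of \<mu>] by metis

lemma cpl_ne:
  assumes "fuzzy_set \<mu>" "fuzzy_set \<eta>" "height \<mu> = height \<eta>"
  shows "(\<lambda>u v. min (\<mu> u) (\<eta> v)) \<in> cpl \<mu> \<eta>"
proof (rule cplI)
  fix u v show "0 \<le> min (\<mu> u) (\<eta> v)" using assms by (auto simp: fuzzy_set_def)
  show "min (\<mu> u) (\<eta> v) \<le> \<mu> u" by simp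
  show "min (\<mu> u) (\<eta> v) \<le> \<eta> v" by simp
next
  fix u obtain v where "\<eta> v = height \<eta>" using height_att by metis
  thus "\<exists>v. min (\<mu> u) (\<eta> v) = \<mu> u" using height_ge[of \<mu> u] assms(3) by (intro exI[of _ v]) auto
next
  fix v obtain u where "\<mu> u = height \<mu>" using height_att by metis
  thus "\<exists>u. min (\<mu> u) (\<eta> v) = \<eta> v" using height_ge[of \<eta> v] assms(3) by (intro exI[of _ u]) auto
qed

lemma val_nonneg: "(\<And>u v. 0 \<le> d u v) \<Longrightarrow> x \<in> cpl \<mu> \<eta> \<Longrightarrow> 0 \<le> val d x"
  using val_ge[of d u u x for u] cpl_nonneg[of x \<mu> \<eta>] by (meson min.boundedI order_trans)

lemma bdd_val: "(\<And>u v. 0 \<le> d u v) \<Longrightarrow> bdd_below (val d ` cpl \<mu> \<eta>)"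
  by (rule bdd_belowI[where m=0]) (auto intro: val_nonneg)

lemma lift_in_T:
  assumes dnn: "\<And>u v. 0 \<le> d u v" and dT: "\<And>u v. d u v \<in> T"
    and mu: "fuzzy_set \<mu>" and eta: "fuzzy_set \<eta>" and muT: "\<And>u. \<mu> u \<in> T" and etaT: "\<And>u. \<eta> u \<in> T"
    and T0: "0 \<in> T" and T1: "1 \<in> T" and fT: "finite T"
  shows "lift d \<mu> \<eta> \<in> T"
proof (cases "height \<mu> = height \<eta>")
  case False thus ?thesis using T1 by (simp add: lift_alt)
next
  case True
  let ?W = "val d ` cpl \<mu> \<eta>"
  have red: "\<exists>x'\<in>cpl \<mu> \<eta>. val d x' \<le> val d x \<and> val d x' \<in> T" if x: "x \<in> cpl \<mu> \<eta>" for x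
  proof -
    define c where "c = val d x"
    have c0: "0 \<le> c" unfolding c_def by (rule val_nonneg[OF dnn x])
    define x' where "x' = (\<lambda>u v. if d u v \<le> c \<or> min (\<mu> u) (\<eta> v) \<le> c then min (\<mu> u) (\<eta> v) else 0)"
    have "x' \<in> cpl \<mu> \<eta>"
    proof (rule cplI)
      fix u v show "0 \<le> x' u v" using mu eta by (auto simp: x'_def fuzzy_set_def)
      show "x' u v \<le> \<mu> u" using mu by (auto simp: x'_def fuzzy_set_def)
      show "x' u v \<le> \<eta> v" using eta by (auto simp: x'_def fuzzy_set_def)
    next
      fix u
      obtain v where v: "x u v = \<mu> u" using cpl_row_att[OF x] by blast
      have le: "\<mu> u \<le> \<eta> v" using cpl_col_le[OF x, of u v] v by simp
      have "min (d u v) (x u v) \<le> c" unfolding c_def by (rule val_ge)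
      hence "x' u v = \<mu> u" using le v by (auto simp: x'_def min_def split: if_splits)
      thus "\<exists>v. x' u v = \<mu> u" by blast
    next
      fix v
      obtain u where u: "x u v = \<eta> v" using cpl_col_att[OF x] by blast
      have le: "\<eta> v \<le> \<mu> u" using cpl_row_le[OF x, of u v] u by simp
      have "min (d u v) (x u v) \<le> c" unfolding c_def by (rule val_ge)
      hence "x' u v = \<eta> v" using le u by (auto simp: x'_def min_def split: if_splits)
      thus "\<exists>u. x' u v = \<eta> v" by blast
    qed
    moreover have "val d x' \<le> c" unfolding val_le_iff
      using c0 dnn by (auto simp: x'_def min_def)
    moreover have "val d x' \<in> T"
    proof -
      obtain u v where "val d x' = min (d u v) (x' u v)" using val_in by blast
      thus ?thesis using dT muT etaT T0 by (auto simp: x'_def min_def)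
    qed
    ultimately show ?thesis unfolding c_def by blast
  qed
  have ne: "cpl \<mu> \<eta> \<noteq> {}" using cpl_ne[OF mu eta True] by blast
  let ?V = "?W \<inter> T"
  have Vfin: "finite ?V" using fT by auto
  have Vne: "?V \<noteq> {}" using red ne by blast
  define m where "m = Min ?V"
  have mV: "m \<in> ?V" unfolding m_def using Min_in Vfin Vne by blast
  have "Inf ?W = m"
  proof (rule cInf_eq_minimum)
    show "m \<in> ?W" using mV by auto
    fix w assume "w \<in> ?W"
    then obtain x where x: "x \<in> cpl \<mu> \<eta>" "w = val d x" by auto
    from red[OF x(1)] obtain x' where x': "x' \<in> cpl \<mu> \<eta>" "val d x' \<le> val d x" "val d x' \<in> T" by blast
    hence "val d x' \<in> ?V" by auto
    hence "m \<le> val d x'" unfolding m_def using Vfin by (rule Min_le[rotated])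
    thus "m \<le> w" using x x' by simp
  qed
  thus ?thesis using mV True by (simp add: lift_alt)
qed



lemma pumD: assumes "pum d"
  shows "0 \<le> d x y" "d x y \<le> 1" "d x x = 0" "d x y = d y x" "d x z \<le> max (d x y) (d y z)"
  using assms unfolding pum_def by blast+

lemma lift_bounds:
  assumes d: "pum d" and mu: "fuzzy_set \<mu>" and eta: "fuzzy_set \<eta>"
  shows "0 \<le> lift d \<mu> \<eta> \<and> lift d \<mu> \<eta> \<le> 1"
proof (cases "height \<mu> = height \<eta>")
  case False thus ?thesis by (simp add: lift_alt)
next
  case True
  have x0: "(\<lambda>u v. min (\<mu> u) (\<eta> v)) \<in> cpl \<mu> \<eta>" by (rule cpl_ne[OF mu eta True])
  have dnn: "\<And>u v. 0 \<le> d u v" using pumD[OF d] by blast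
  have "0 \<le> Inf (val d ` cpl \<mu> \<eta>)"
    using x0 by (intro cInf_greatest) (auto intro: val_nonneg[OF dnn])
  moreover have "Inf (val d ` cpl \<mu> \<eta>) \<le> val d (\<lambda>u v. min (\<mu> u) (\<eta> v))"
    using x0 by (intro cInf_lower bdd_val[OF dnn]) auto
  moreover have "val d (\<lambda>u v. min (\<mu> u) (\<eta> v)) \<le> 1"
    unfolding val_le_iff using pumD(2)[OF d] by (meson min.coboundedI1)
  ultimately show ?thesis using True by (simp add: lift_alt)
qed

lemma lift_refl:
  assumes d: "pum d" and mu: "fuzzy_set \<mu>"
  shows "lift d \<mu> \<mu> = 0"
proof -
  define x0 where "x0 = (\<lambda>u v. if u = v then \<mu> u else 0)"
  have x0: "x0 \<in> cpl \<mu> \<mu>"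
    by (rule cplI) (use mu in \<open>auto simp: x0_def fuzzy_set_def\<close>)
  have dnn: "\<And>u v. 0 \<le> d u v" using pumD[OF d] by blast
  have "0 \<le> Inf (val d ` cpl \<mu> \<mu>)"
    using x0 by (intro cInf_greatest) (auto intro: val_nonneg[OF dnn])
  moreover have "Inf (val d ` cpl \<mu> \<mu>) \<le> val d x0"
    using x0 by (intro cInf_lower bdd_val[OF dnn]) auto
  moreover have "val d x0 \<le> 0"
    unfolding val_le_iff using pumD(3)[OF d] by (auto simp: x0_def)
  ultimately show ?thesis by (simp add: lift_alt)
qed

lemma lift_sym_le:
  assumes d: "pum d" and mu: "fuzzy_set \<mu>" and eta: "fuzzy_set \<eta>"
  shows "lift d \<mu> \<eta> \<le> lift d \<eta> \<mu>"
proof (cases "height \<mu> = height \<eta>")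
  case False thus ?thesis by (simp add: lift_alt)
next
  case True
  have dnn: "\<And>u v. 0 \<le> d u v" using pumD[OF d] by blast
  have ne: "cpl \<eta> \<mu> \<noteq> {}" using cpl_ne[OF eta mu] True by auto
  have "Inf (val d ` cpl \<mu> \<eta>) \<le> Inf (val d ` cpl \<eta> \<mu>)"
  proof (rule cInf_greatest)
    show "val d ` cpl \<eta> \<mu> \<noteq> {}" using ne by auto
    fix w assume "w \<in> val d ` cpl \<eta> \<mu>"
    then obtain y where y: "y \<in> cpl \<eta> \<mu>" "w = val d y" by auto
    define yt where "yt = (\<lambda>u v. y v u)"
    have yt: "yt \<in> cpl \<mu> \<eta>" using y(1) unfolding cpl_def yt_def by auto
    have "val d yt \<le> val d y" unfolding val_le_iff yt_def
    proof (intro allI)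
      fix u v show "min (d u v) (y v u) \<le> val d y"
        using val_ge[of d v u y] pumD(4)[OF d, of u v] by simp
    qed
    moreover have "Inf (val d ` cpl \<mu> \<eta>) \<le> val d yt"
      using yt by (intro cInf_lower bdd_val[OF dnn]) auto
    ultimately show "Inf (val d ` cpl \<mu> \<eta>) \<le> w" using y by simp
  qed
  thus ?thesis using True by (simp add: lift_alt)
qed

lemma lift_sym:
  assumes d: "pum d" and mu: "fuzzy_set \<mu>" and eta: "fuzzy_set \<eta>"
  shows "lift d \<mu> \<eta> = lift d \<eta> \<mu>"
  using lift_sym_le[OF d mu eta] lift_sym_le[OF d eta mu] by simp

lemma glue:
  assumes d: "pum d" and x: "x \<in> cpl \<mu> \<eta>" and y: "y \<in> cpl \<eta> \<rho>"
  shows "\<exists>z\<in>cpl \<mu> \<rho>. val d z \<le> max (val d x) (val d y)"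
proof -
  define z where "z = (\<lambda>u w. Max (range (\<lambda>v. min (x u v) (y v w))))"
  have zge: "min (x u v) (y v w) \<le> z u w" for u v w unfolding z_def by (rule max_range_ge)
  have zin: "\<exists>v. z u w = min (x u v) (y v w)" for u w unfolding z_def by (rule max_range_in)
  have "z \<in> cpl \<mu> \<rho>"
  proof (rule cplI)
    fix u w
    have "0 \<le> min (x u u) (y u w)" using cpl_nonneg[OF x, of u u] cpl_nonneg[OF y, of u w] by simp
    thus "0 \<le> z u w" using zge[of u u w] by linarith
    obtain v where "z u w = min (x u v) (y v w)" using zin by blast
    thus "z u w \<le> \<mu> u" "z u w \<le> \<rho> w" using cpl_row_le[OF x, of u v] cpl_col_le[OF y, of v w] by auto
  next
    fix u
    obtain v where v: "x u v = \<mu> u" using cpl_row_att[OF x] by blast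
    obtain w where w: "y v w = \<eta> v" using cpl_row_att[OF y] by blast
    have "\<mu> u \<le> \<eta> v" using cpl_col_le[OF x, of u v] v by simp
    hence "\<mu> u \<le> z u w" using zge[of u v w] v w by simp
    moreover have "z u w \<le> \<mu> u"
      using zin[of u w] cpl_row_le[OF x, of u] by (metis min.coboundedI1)
    ultimately show "\<exists>w. z u w = \<mu> u" by (intro exI[of _ w]) simp
  next
    fix w
    obtain v where v: "y v w = \<rho> w" using cpl_col_att[OF y] by blast
    obtain u where u: "x u v = \<eta> v" using cpl_col_att[OF x] by blast
    have "\<rho> w \<le> \<eta> v" using cpl_row_le[OF y, of v w] v by simp
    hence "\<rho> w \<le> z u w" using zge[of u v w] v u by simp
    moreover have "z u w \<le> \<rho> w"
      using zin[of u w] cpl_col_le[OF y, of _ w] by (metis min.coboundedI2)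
    ultimately show "\<exists>u. z u w = \<rho> w" by (intro exI[of _ u]) simp
  qed
  moreover have "val d z \<le> max (val d x) (val d y)"
    unfolding val_le_iff
  proof (intro allI)
    fix u w
    obtain v where v: "z u w = min (x u v) (y v w)" using zin by blast
    have t: "d u w \<le> max (d u v) (d v w)" by (rule pumD(5)[OF d])
    have a: "min (d u v) (x u v) \<le> val d x" by (rule val_ge)
    have b: "min (d v w) (y v w) \<le> val d y" by (rule val_ge)
    have z1: "z u w \<le> x u v" "z u w \<le> y v w" using v by auto
    show "min (d u w) (z u w) \<le> max (val d x) (val d y)"
    proof (cases "d v w \<le> d u v")
      case True
      hence "d u w \<le> d u v" using t by simp
      hence "min (d u w) (z u w) \<le> min (d u v) (x u v)" using z1(1) by (rule min.mono)
      hence "min (d u w) (z u w) \<le> val d x" using a by (rule order_trans)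
      thus ?thesis by (rule order_trans[OF _ max.cobounded1])
    next
      case False
      hence "d u w \<le> d v w" using t by simp
      hence "min (d u w) (z u w) \<le> min (d v w) (y v w)" using z1(2) by (rule min.mono)
      hence "min (d u w) (z u w) \<le> val d y" using b by (rule order_trans)
      thus ?thesis by (rule order_trans[OF _ max.cobounded2])
    qed
  qed
  ultimately show ?thesis by blast
qed

lemma inf_ultra:
  fixes A B C :: "real set"
  assumes neA: "A \<noteq> {}" and neB: "B \<noteq> {}" and bA: "bdd_below A" and bB: "bdd_below B" and bC: "bdd_below C"
    and g: "\<And>a b. a \<in> A \<Longrightarrow> b \<in> B \<Longrightarrow> \<exists>c\<in>C. c \<le> max a b"
  shows "Inf C \<le> max (Inf A) (Inf B)"
proof (rule ccontr)
  assume "\<not> ?thesis"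
  hence lt: "Inf A < Inf C" "Inf B < Inf C" by auto
  obtain a where a: "a \<in> A" "a < Inf C" using lt(1) cInf_less_iff[OF neA bA] by blast
  obtain b where b: "b \<in> B" "b < Inf C" using lt(2) cInf_less_iff[OF neB bB] by blast
  obtain c where c: "c \<in> C" "c \<le> max a b" using g[OF a(1) b(1)] by blast
  have "Inf C \<le> c" using c bC by (intro cInf_lower)
  moreover have "max a b < Inf C" using a b by simp
  ultimately show False using c(2) by linarith
qed

lemma lift_ultra:
  assumes d: "pum d" and mu: "fuzzy_set \<mu>" and eta: "fuzzy_set \<eta>" and rho: "fuzzy_set \<rho>"
  shows "lift d \<mu> \<rho> \<le> max (lift d \<mu> \<eta>) (lift d \<eta> \<rho>)"
proof (cases "height \<mu> = height \<eta> \<and> height \<eta> = height \<rho>")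
  case False
  hence "height \<mu> \<noteq> height \<eta> \<or> height \<eta> \<noteq> height \<rho>" by blast
  hence "lift d \<mu> \<eta> = 1 \<or> lift d \<eta> \<rho> = 1" unfolding lift_alt by auto
  hence "1 \<le> max (lift d \<mu> \<eta>) (lift d \<eta> \<rho>)" by auto
  thus ?thesis using lift_bounds[OF d mu rho] by linarith
next
  case True
  have dnn: "\<And>u v. 0 \<le> d u v" using pumD[OF d] by blast
  have h1: "height \<mu> = height \<eta>" and h2: "height \<eta> = height \<rho>" using True by auto
  have "Inf (val d ` cpl \<mu> \<rho>) \<le> max (Inf (val d ` cpl \<mu> \<eta>)) (Inf (val d ` cpl \<eta> \<rho>))"
  proof (rule inf_ultra)
    show "val d ` cpl \<mu> \<eta> \<noteq> {}" using cpl_ne[OF mu eta h1] by blast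
    show "val d ` cpl \<eta> \<rho> \<noteq> {}" using cpl_ne[OF eta rho h2] by blast
    show "bdd_below (val d ` cpl \<mu> \<eta>)" "bdd_below (val d ` cpl \<eta> \<rho>)" "bdd_below (val d ` cpl \<mu> \<rho>)"
      by (rule bdd_val, rule dnn)+
    fix a b assume "a \<in> val d ` cpl \<mu> \<eta>" "b \<in> val d ` cpl \<eta> \<rho>"
    then obtain x y where xy: "x \<in> cpl \<mu> \<eta>" "a = val d x" "y \<in> cpl \<eta> \<rho>" "b = val d y" by blast
    obtain z where z: "z \<in> cpl \<mu> \<rho>" "val d z \<le> max (val d x) (val d y)"
      using glue[OF d xy(1) xy(3)] by blast
    show "\<exists>c\<in>val d ` cpl \<mu> \<rho>. c \<le> max a b" using z xy(2,4) by blast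
  qed
  moreover have "lift d \<mu> \<rho> = Inf (val d ` cpl \<mu> \<rho>)" using h1 h2 by (simp add: lift_alt)
  moreover have "lift d \<mu> \<eta> = Inf (val d ` cpl \<mu> \<eta>)" using h1 by (simp add: lift_alt)
  moreover have "lift d \<eta> \<rho> = Inf (val d ` cpl \<eta> \<rho>)" using h2 by (simp add: lift_alt)
  ultimately show ?thesis by simp
qed

lemma lift_mono:
  assumes d: "pum d" and d': "pum d'" and le: "\<And>u v. d u v \<le> d' u v"
    and mu: "fuzzy_set \<mu>" and eta: "fuzzy_set \<eta>"
  shows "lift d \<mu> \<eta> \<le> lift d' \<mu> \<eta>"
proof (cases "height \<mu> = height \<eta>")
  case False thus ?thesis by (simp add: lift_alt)
next
  case True
  have dnn: "\<And>u v. 0 \<le> d u v" using pumD[OF d] by blast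
  have ne: "cpl \<mu> \<eta> \<noteq> {}" using cpl_ne[OF mu eta] True by auto
  have "Inf (val d ` cpl \<mu> \<eta>) \<le> Inf (val d' ` cpl \<mu> \<eta>)"
  proof (rule cInf_greatest)
    show "val d' ` cpl \<mu> \<eta> \<noteq> {}" using ne by auto
    fix w assume "w \<in> val d' ` cpl \<mu> \<eta>"
    then obtain y where y: "y \<in> cpl \<mu> \<eta>" "w = val d' y" by auto
    have "val d y \<le> val d' y" unfolding val_le_iff
    proof (intro allI)
      fix u v show "min (d u v) (y u v) \<le> val d' y"
        using min.mono[OF le[of u v] order_refl[of "y u v"]] val_ge[of d' u v y] by (rule order_trans)
    qed
    moreover have "Inf (val d ` cpl \<mu> \<eta>) \<le> val d y"
      using y by (intro cInf_lower bdd_val[OF dnn]) auto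
    ultimately show "Inf (val d ` cpl \<mu> \<eta>) \<le> w" using y by simp
  qed
  thus ?thesis using True by (simp add: lift_alt)
qed



lemma max0_ge: "finite A \<Longrightarrow> a \<in> A \<Longrightarrow> a \<le> max0 A"
  unfolding max0_def by auto
lemma max0_le: "finite A \<Longrightarrow> (\<And>a. a \<in> A \<Longrightarrow> a \<le> c) \<Longrightarrow> (A = {} \<Longrightarrow> 0 \<le> c) \<Longrightarrow> max0 A \<le> c"
  unfolding max0_def by auto
lemma max0_in: "finite A \<Longrightarrow> A \<noteq> {} \<Longrightarrow> max0 A \<in> A"
  unfolding max0_def by auto
lemma max0_nonneg: "finite A \<Longrightarrow> (\<And>a. a \<in> A \<Longrightarrow> 0 \<le> a) \<Longrightarrow> 0 \<le> max0 A"
proof (cases "A = {}")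
  case True thus ?thesis by (simp add: max0_def)
next
  case False
  assume f: "finite A" and n: "\<And>a. a \<in> A \<Longrightarrow> 0 \<le> a"
  from False obtain a where "a \<in> A" by blast
  thus ?thesis using max0_ge[OF f, of a] n[of a] by linarith
qed

lemma ls_le: "finite Z \<Longrightarrow> \<eta> \<in> Z \<Longrightarrow> lift_set d \<mu> Z \<le> lift d \<mu> \<eta>"
  unfolding lift_set_def by auto
lemma ls_att: assumes "finite Z" "Z \<noteq> {}" shows "\<exists>\<eta>\<in>Z. lift_set d \<mu> Z = lift d \<mu> \<eta>"
proof -
  have "Min (lift d \<mu> ` Z) \<in> lift d \<mu> ` Z" using assms by (intro Min_in) auto
  thus ?thesis using assms(2) unfolding lift_set_def by auto
qed
lemma ls_empty: "lift_set d \<mu> {} = 1"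
  unfolding lift_set_def by simp

lemma ls_bounds:
  assumes d: "pum d" and mu: "fuzzy_set \<mu>" and fZ: "finite Z" and FZ: "\<forall>\<eta>\<in>Z. fuzzy_set \<eta>"
  shows "0 \<le> lift_set d \<mu> Z \<and> lift_set d \<mu> Z \<le> 1"
proof (cases "Z = {}")
  case True thus ?thesis by (simp add: ls_empty)
next
  case False
  then obtain \<eta> where "\<eta> \<in> Z" "lift_set d \<mu> Z = lift d \<mu> \<eta>" using ls_att[OF fZ] by blast
  thus ?thesis using lift_bounds[OF d mu] FZ by auto
qed

lemma H_ge1: assumes "finite Y" "\<mu> \<in> Y" shows "lift_set d \<mu> Z \<le> hausdorff d Y Z"
proof -
  have "lift_set d \<mu> Z \<le> max0 ((\<lambda>\<mu>. lift_set d \<mu> Z) ` Y)" using assms by (intro max0_ge) auto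
  moreover have "Y \<noteq> {}" using assms by auto
  ultimately show ?thesis unfolding hausdorff_def by simp
qed

lemma H_ge2: assumes "finite Z" "\<eta> \<in> Z" shows "lift_set d \<eta> Y \<le> hausdorff d Y Z"
proof -
  have "lift_set d \<eta> Y \<le> max0 ((\<lambda>\<eta>. lift_set d \<eta> Y) ` Z)" using assms by (intro max0_ge) auto
  moreover have "Z \<noteq> {}" using assms by auto
  ultimately show ?thesis unfolding hausdorff_def by simp
qed

lemma H_bounds:
  assumes d: "pum d" and fY: "finite Y" and fZ: "finite Z"
    and FY: "\<forall>\<mu>\<in>Y. fuzzy_set \<mu>" and FZ: "\<forall>\<eta>\<in>Z. fuzzy_set \<eta>"
  shows "0 \<le> hausdorff d Y Z \<and> hausdorff d Y Z \<le> 1"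
proof -
  have b1: "0 \<le> lift_set d \<mu> Z \<and> lift_set d \<mu> Z \<le> 1" if "\<mu> \<in> Y" for \<mu>
    using ls_bounds[OF d _ fZ FZ] FY that by blast
  have b2: "0 \<le> lift_set d \<eta> Y \<and> lift_set d \<eta> Y \<le> 1" if "\<eta> \<in> Z" for \<eta>
    using ls_bounds[OF d _ fY FY] FZ that by blast
  have m1: "0 \<le> max0 ((\<lambda>\<mu>. lift_set d \<mu> Z) ` Y)" "max0 ((\<lambda>\<mu>. lift_set d \<mu> Z) ` Y) \<le> 1"
    using fY b1 by (auto intro!: max0_nonneg max0_le)
  have m2: "0 \<le> max0 ((\<lambda>\<eta>. lift_set d \<eta> Y) ` Z)" "max0 ((\<lambda>\<eta>. lift_set d \<eta> Y) ` Z) \<le> 1"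
    using fZ b2 by (auto intro!: max0_nonneg max0_le)
  show ?thesis unfolding hausdorff_def using m1 m2 by auto
qed

lemma H_refl:
  assumes d: "pum d" and fY: "finite Y" and FY: "\<forall>\<mu>\<in>Y. fuzzy_set \<mu>"
  shows "hausdorff d Y Y = 0"
proof (cases "Y = {}")
  case True thus ?thesis by (simp add: hausdorff_def)
next
  case False
  have "lift_set d \<mu> Y \<le> 0" if "\<mu> \<in> Y" for \<mu>
    using ls_le[OF fY that, of d \<mu>] lift_refl[OF d] FY that by auto
  hence "max0 ((\<lambda>\<mu>. lift_set d \<mu> Y) ` Y) \<le> 0" using fY by (intro max0_le) auto
  moreover have "0 \<le> hausdorff d Y Y" using H_bounds[OF d fY fY FY FY] by blast
  ultimately show ?thesis using False unfolding hausdorff_def by auto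
qed

lemma H_sym: "hausdorff d Y Z = hausdorff d Z Y"
  unfolding hausdorff_def by (auto simp: max.commute)

lemma H_ultra:
  assumes d: "pum d" and fY: "finite Y" and fZ: "finite Z" and fW: "finite W"
    and FY: "\<forall>\<mu>\<in>Y. fuzzy_set \<mu>" and FZ: "\<forall>\<eta>\<in>Z. fuzzy_set \<eta>" and FW: "\<forall>\<rho>\<in>W. fuzzy_set \<rho>"
  shows "hausdorff d Y W \<le> max (hausdorff d Y Z) (hausdorff d Z W)"
proof -
  define c where "c = max (hausdorff d Y Z) (hausdorff d Z W)"
  have hYZ: "hausdorff d Y Z \<le> c" and hZW: "hausdorff d Z W \<le> c" unfolding c_def by auto
  have c0: "0 \<le> c" using H_bounds[OF d fY fZ FY FZ] hYZ by linarith
  have p1: "lift_set d \<mu> W \<le> c" if mu: "\<mu> \<in> Y" for \<mu>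
  proof -
    have lsW: "lift_set d \<mu> W \<le> 1" using ls_bounds[OF d _ fW FW] FY mu by blast
    show ?thesis
    proof (cases "Z = {}")
      case True
      have "lift_set d \<mu> Z \<le> hausdorff d Y Z" by (rule H_ge1[OF fY mu])
      thus ?thesis using True lsW hYZ by (simp add: ls_empty)
    next
      case False
      then obtain \<eta> where eta: "\<eta> \<in> Z" "lift_set d \<mu> Z = lift d \<mu> \<eta>" using ls_att[OF fZ] by blast
      have e1: "lift d \<mu> \<eta> \<le> c" using H_ge1[OF fY mu, of d Z] eta hYZ by simp
      show ?thesis
      proof (cases "W = {}")
        case True
        have "lift_set d \<eta> W \<le> hausdorff d Z W" by (rule H_ge1[OF fZ eta(1)])
        thus ?thesis using True lsW hZW by (simp add: ls_empty)
      next
        case False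
        then obtain \<rho> where rho: "\<rho> \<in> W" "lift_set d \<eta> W = lift d \<eta> \<rho>" using ls_att[OF fW] by blast
        have e2: "lift d \<eta> \<rho> \<le> c" using H_ge1[OF fZ eta(1), of d W] rho hZW by simp
        have "lift d \<mu> \<rho> \<le> max (lift d \<mu> \<eta>) (lift d \<eta> \<rho>)"
          using lift_ultra[OF d] FY FZ FW mu eta(1) rho(1) by blast
        moreover have "lift_set d \<mu> W \<le> lift d \<mu> \<rho>" by (rule ls_le[OF fW rho(1)])
        ultimately show ?thesis using e1 e2 by simp
      qed
    qed
  qed
  have p2: "lift_set d \<rho> Y \<le> c" if rho: "\<rho> \<in> W" for \<rho>
  proof -
    have lsY: "lift_set d \<rho> Y \<le> 1" using ls_bounds[OF d _ fY FY] FW rho by blast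
    show ?thesis
    proof (cases "Z = {}")
      case True
      have "lift_set d \<rho> Z \<le> hausdorff d Z W" by (rule H_ge2[OF fW rho])
      thus ?thesis using True lsY hZW by (simp add: ls_empty)
    next
      case False
      then obtain \<eta> where eta: "\<eta> \<in> Z" "lift_set d \<rho> Z = lift d \<rho> \<eta>" using ls_att[OF fZ] by blast
      have e1: "lift d \<rho> \<eta> \<le> c" using H_ge2[OF fW rho, of d Z] eta hZW by simp
      show ?thesis
      proof (cases "Y = {}")
        case True
        have "lift_set d \<eta> Y \<le> hausdorff d Y Z" by (rule H_ge2[OF fZ eta(1)])
        thus ?thesis using True lsY hYZ by (simp add: ls_empty)
      next
        case False
        then obtain \<mu> where mu: "\<mu> \<in> Y" "lift_set d \<eta> Y = lift d \<eta> \<mu>" using ls_att[OF fY] by blast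
        have e2: "lift d \<eta> \<mu> \<le> c" using H_ge2[OF fZ eta(1), of d Y] mu hYZ by simp
        have "lift d \<rho> \<mu> \<le> max (lift d \<rho> \<eta>) (lift d \<eta> \<mu>)"
          using lift_ultra[OF d] FY FZ FW mu(1) eta(1) rho by blast
        moreover have "lift_set d \<rho> Y \<le> lift d \<rho> \<mu>" by (rule ls_le[OF fY mu(1)])
        ultimately show ?thesis using e1 e2 by simp
      qed
    qed
  qed
  have "max0 ((\<lambda>\<mu>. lift_set d \<mu> W) ` Y) \<le> c" using fY p1 c0 by (intro max0_le) auto
  moreover have "max0 ((\<lambda>\<rho>. lift_set d \<rho> Y) ` W) \<le> c" using fW p2 c0 by (intro max0_le) auto
  ultimately have "hausdorff d Y W \<le> c" unfolding hausdorff_def using c0 by auto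
  thus ?thesis unfolding c_def .
qed

lemma ls_mono:
  assumes d: "pum d" and d': "pum d'" and le: "\<And>u v. d u v \<le> d' u v"
    and mu: "fuzzy_set \<mu>" and fZ: "finite Z" and FZ: "\<forall>\<eta>\<in>Z. fuzzy_set \<eta>"
  shows "lift_set d \<mu> Z \<le> lift_set d' \<mu> Z"
proof (cases "Z = {}")
  case True thus ?thesis by (simp add: ls_empty)
next
  case False
  then obtain \<eta> where eta: "\<eta> \<in> Z" "lift_set d' \<mu> Z = lift d' \<mu> \<eta>" using ls_att[OF fZ] by blast
  have "lift d \<mu> \<eta> \<le> lift d' \<mu> \<eta>" using lift_mono[OF d d' le mu] FZ eta(1) by blast
  thus ?thesis using ls_le[OF fZ eta(1), of d \<mu>] eta(2) by linarith
qed

lemma max0_mono: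
  assumes "finite Y" "\<And>y. y \<in> Y \<Longrightarrow> f y \<le> g y"
  shows "max0 (f ` Y) \<le> max0 (g ` Y)"
proof (cases "Y = {}")
  case True thus ?thesis by simp
next
  case False
  show ?thesis
  proof (rule max0_le)
    show "finite (f ` Y)" using assms by auto
    fix a assume "a \<in> f ` Y"
    then obtain y where y: "y \<in> Y" "a = f y" by auto
    have "g y \<le> max0 (g ` Y)" using assms y by (intro max0_ge) auto
    thus "a \<le> max0 (g ` Y)" using assms(2)[OF y(1)] y(2) by linarith
  next
    assume "f ` Y = {}" thus "0 \<le> max0 (g ` Y)" using False by simp
  qed
qed

lemma H_mono:
  assumes d: "pum d" and d': "pum d'" and le: "\<And>u v. d u v \<le> d' u v"
    and fY: "finite Y" and fZ: "finite Z" and FY: "\<forall>\<mu>\<in>Y. fuzzy_set \<mu>" and FZ: "\<forall>\<eta>\<in>Z. fuzzy_set \<eta>"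
  shows "hausdorff d Y Z \<le> hausdorff d' Y Z"
proof -
  have "max0 ((\<lambda>\<mu>. lift_set d \<mu> Z) ` Y) \<le> max0 ((\<lambda>\<mu>. lift_set d' \<mu> Z) ` Y)"
    using fY ls_mono[OF d d' le _ fZ FZ] FY by (intro max0_mono) auto
  moreover have "max0 ((\<lambda>\<eta>. lift_set d \<eta> Y) ` Z) \<le> max0 ((\<lambda>\<eta>. lift_set d' \<eta> Y) ` Z)"
    using fZ ls_mono[OF d d' le _ fY FY] FZ by (intro max0_mono) auto
  ultimately show ?thesis unfolding hausdorff_def by (auto intro: max.mono)
qed

lemma H_T:
  assumes d: "pum d" and dT: "\<And>u v. d u v \<in> T"
    and fY: "finite Y" and fZ: "finite Z" and FY: "\<forall>\<mu>\<in>Y. fuzzy_set \<mu>" and FZ: "\<forall>\<eta>\<in>Z. fuzzy_set \<eta>"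
    and TY: "\<And>\<mu> u. \<mu> \<in> Y \<Longrightarrow> \<mu> u \<in> T" and TZ: "\<And>\<mu> u. \<mu> \<in> Z \<Longrightarrow> \<mu> u \<in> T"
    and T0: "0 \<in> T" and T1: "1 \<in> T" and fT: "finite T"
  shows "hausdorff d Y Z \<in> T"
proof -
  have dnn: "\<And>u v. 0 \<le> d u v" using pumD[OF d] by blast
  have lT: "lift d \<mu> \<eta> \<in> T" if "\<mu> \<in> Y \<union> Z" "\<eta> \<in> Y \<union> Z" for \<mu> \<eta>
  proof (rule lift_in_T[OF dnn dT])
    show "fuzzy_set \<mu>" "fuzzy_set \<eta>" using that FY FZ by auto
    show "\<mu> u \<in> T" "\<eta> u \<in> T" for u using that TY TZ by auto
  qed (fact T0 T1 fT)+
  have lsT: "lift_set d \<mu> X \<in> T" if "\<mu> \<in> Y \<union> Z" "X = Y \<or> X = Z" for \<mu> X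
  proof (cases "X = {}")
    case True thus ?thesis using T1 by (simp add: ls_empty)
  next
    case False
    have fX: "finite X" using that fY fZ by auto
    obtain \<eta> where "\<eta> \<in> X" "lift_set d \<mu> X = lift d \<mu> \<eta>" using ls_att[OF fX False] by blast
    thus ?thesis using lT[of \<mu> \<eta>] that by auto
  qed
  have m1: "max0 ((\<lambda>\<mu>. lift_set d \<mu> Z) ` Y) \<in> T"
  proof (cases "Y = {}")
    case True thus ?thesis using T0 by (simp add: max0_def)
  next
    case False
    have "max0 ((\<lambda>\<mu>. lift_set d \<mu> Z) ` Y) \<in> (\<lambda>\<mu>. lift_set d \<mu> Z) ` Y" using fY False by (intro max0_in) auto
    thus ?thesis using lsT by auto
  qed
  have m2: "max0 ((\<lambda>\<eta>. lift_set d \<eta> Y) ` Z) \<in> T"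
  proof (cases "Z = {}")
    case True thus ?thesis using T0 by (simp add: max0_def)
  next
    case False
    have "max0 ((\<lambda>\<eta>. lift_set d \<eta> Y) ` Z) \<in> (\<lambda>\<eta>. lift_set d \<eta> Y) ` Z" using fZ False by (intro max0_in) auto
    thus ?thesis using lsT by auto
  qed
  show ?thesis unfolding hausdorff_def using m1 m2 T0 by (auto simp: max_def)
qed



lemma fts_fin: "fts \<delta> \<Longrightarrow> finite (\<delta> s a)" unfolding fts_def by blast
lemma fts_fz: "fts \<delta> \<Longrightarrow> \<forall>\<mu>\<in>\<delta> s a. fuzzy_set \<mu>" unfolding fts_def by blast

lemma Delta1: "Delta 1 \<delta> d s t = Max (range (\<lambda>a. hausdorff d (\<delta> s a) (\<delta> t a)))"
  unfolding Delta_def by simp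

lemma Delta_pum:
  assumes f: "fts \<delta>" and d: "pum d"
  shows "pum (Delta 1 \<delta> d)"
proof -
  note H = fts_fin[OF f] fts_fz[OF f]
  have b: "0 \<le> Delta 1 \<delta> d x y \<and> Delta 1 \<delta> d x y \<le> 1" for x y
  proof -
    obtain a where a: "Delta 1 \<delta> d x y = hausdorff d (\<delta> x a) (\<delta> y a)"
      unfolding Delta1 using max_range_in by metis
    thus ?thesis using H_bounds[OF d H(1) H(1) H(2) H(2)] by simp
  qed
  have r: "Delta 1 \<delta> d x x = 0" for x
    unfolding Delta1 by (rule max_range_eqI[where w=undefined]) (auto simp: H_refl[OF d H(1) H(2)])
  have s: "Delta 1 \<delta> d x y = Delta 1 \<delta> d y x" for x y
  proof -
    show ?thesis unfolding Delta1
      by (rule arg_cong[where f="\<lambda>f. Max (range f)"]) (rule ext, rule H_sym)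
  qed
  have u: "Delta 1 \<delta> d x z \<le> max (Delta 1 \<delta> d x y) (Delta 1 \<delta> d y z)" for x y z
  proof -
    obtain a where a: "Delta 1 \<delta> d x z = hausdorff d (\<delta> x a) (\<delta> z a)"
      unfolding Delta1 using max_range_in by metis
    have "hausdorff d (\<delta> x a) (\<delta> z a) \<le> max (hausdorff d (\<delta> x a) (\<delta> y a)) (hausdorff d (\<delta> y a) (\<delta> z a))"
      by (rule H_ultra[OF d H(1) H(1) H(1) H(2) H(2) H(2)])
    moreover have "hausdorff d (\<delta> x a) (\<delta> y a) \<le> Delta 1 \<delta> d x y"
      unfolding Delta1 by (rule max_range_ge)
    moreover have "hausdorff d (\<delta> y a) (\<delta> z a) \<le> Delta 1 \<delta> d y z"
      unfolding Delta1 by (rule max_range_ge)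
    ultimately have "max (hausdorff d (\<delta> x a) (\<delta> y a)) (hausdorff d (\<delta> y a) (\<delta> z a))
        \<le> max (Delta 1 \<delta> d x y) (Delta 1 \<delta> d y z)"
      and h: "hausdorff d (\<delta> x a) (\<delta> z a) \<le> max (hausdorff d (\<delta> x a) (\<delta> y a)) (hausdorff d (\<delta> y a) (\<delta> z a))"
      by (auto intro: max.mono)
    thus ?thesis using a by linarith
  qed
  show ?thesis unfolding pum_def using b r s u by blast
qed

lemma Delta_mono:
  assumes f: "fts \<delta>" and d: "pum d" and d': "pum d'" and le: "\<And>u v. d u v \<le> d' u v"
  shows "Delta 1 \<delta> d x y \<le> Delta 1 \<delta> d' x y"
proof -
  note H = fts_fin[OF f] fts_fz[OF f]
  obtain a where a: "Delta 1 \<delta> d x y = hausdorff d (\<delta> x a) (\<delta> y a)"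
    unfolding Delta1 using max_range_in by metis
  have "hausdorff d (\<delta> x a) (\<delta> y a) \<le> hausdorff d' (\<delta> x a) (\<delta> y a)"
    by (rule H_mono[OF d d' le H(1) H(1) H(2) H(2)])
  moreover have "hausdorff d' (\<delta> x a) (\<delta> y a) \<le> Delta 1 \<delta> d' x y"
    unfolding Delta1 by (rule max_range_ge)
  ultimately show ?thesis using a by simp
qed

lemma Theta_fin: assumes f: "fts \<delta>" shows "finite (Theta \<delta>)"
proof -
  have "Theta \<delta> \<subseteq> insert 0 (insert 1 (\<Union>s. \<Union>a. \<Union>\<mu>\<in>\<delta> s a. range \<mu>))"
    unfolding Theta_def by blast
  moreover have "finite (\<Union>s. \<Union>a. \<Union>\<mu>\<in>\<delta> s a. range \<mu>)" using fts_fin[OF f] by auto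
  ultimately show ?thesis by (meson finite_insert finite_subset)
qed

lemma Delta_T:
  assumes f: "fts \<delta>" and d: "pum d" and dT: "\<And>u v. d u v \<in> Theta \<delta>"
  shows "Delta 1 \<delta> d x y \<in> Theta \<delta>"
proof -
  note H = fts_fin[OF f] fts_fz[OF f]
  obtain a where a: "Delta 1 \<delta> d x y = hausdorff d (\<delta> x a) (\<delta> y a)"
    unfolding Delta1 using max_range_in by metis
  have T01: "0 \<in> Theta \<delta>" "1 \<in> Theta \<delta>" by (simp_all add: Theta_def)
  have TT: "\<mu> u \<in> Theta \<delta>" if "\<mu> \<in> \<delta> s b" for \<mu> u s b using that unfolding Theta_def by blast
  have "hausdorff d (\<delta> x a) (\<delta> y a) \<in> Theta \<delta>"
    apply (rule H_T[where T="Theta \<delta>"])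
    using d dT fts_fin[OF f] fts_fz[OF f] TT T01 Theta_fin[OF f] by blast+
  thus ?thesis using a by simp
qed

theorem lemma4:
  fixes \<delta> :: "'s::finite \<Rightarrow> 'a::finite \<Rightarrow> ('s \<Rightarrow> real) set"
  assumes "fts \<delta>"
  shows "\<forall>s t. dfix 1 \<delta> s t \<in> Theta \<delta>"
proof -
  note f = assms
  define T where "T = Theta \<delta>"
  have fT: "finite T" unfolding T_def by (rule Theta_fin[OF f])
  define D where "D n = (Delta 1 \<delta> ^^ n) (\<lambda>_ _. 0)" for n
  have DS: "D (Suc n) = Delta 1 \<delta> (D n)" for n by (simp add: D_def)
  have D0: "D 0 = (\<lambda>_ _. 0)" by (simp add: D_def)
  have pum0: "pum (\<lambda>(_::'s) (_::'s). 0::real)" unfolding pum_def by simp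
  have inv: "pum (D n) \<and> (\<forall>s t. D n s t \<in> T)" for n
  proof (induction n)
    case 0 thus ?case using pum0 by (simp add: D0 T_def Theta_def)
  next
    case (Suc n)
    thus ?case unfolding DS T_def using Delta_pum[OF f] Delta_T[OF f] by blast
  qed
  have mono: "D n \<le> D (Suc n)" for n
  proof (induction n)
    case 0
    show ?case unfolding le_fun_def D0 using inv[of 1] pumD(1) by fastforce
  next
    case (Suc n)
    show ?case unfolding le_fun_def
    proof (intro allI)
      fix x y
      have "Delta 1 \<delta> (D n) x y \<le> Delta 1 \<delta> (D (Suc n)) x y"
        by (rule Delta_mono[OF f]) (use inv Suc.IH in \<open>auto simp: le_fun_def\<close>)
      thus "D (Suc n) x y \<le> D (Suc (Suc n)) x y" by (simp only: DS)
    qed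
  qed
  have "\<exists>N. D (Suc N) = D N"
  proof (rule ccontr)
    assume "\<not> ?thesis"
    hence ne: "D (Suc n) \<noteq> D n" for n by blast
    have "D n < D (Suc n)" for n using mono[of n] ne[of n] by (metis less_le)
    hence sm: "strict_mono D" by (simp add: strict_mono_Suc_iff)
    have "inj D" using strict_mono_imp_inj_on[OF sm] .
    moreover have "range D \<subseteq> (\<Pi>\<^sub>E s\<in>UNIV. \<Pi>\<^sub>E t\<in>UNIV. T)"
      using inv by (auto simp: PiE_UNIV_domain)
    moreover have "finite (\<Pi>\<^sub>E s\<in>(UNIV::'s set). \<Pi>\<^sub>E t\<in>(UNIV::'s set). T)"
      using fT by (intro finite_PiE) auto
    ultimately have "finite (UNIV :: nat set)"
      using finite_subset finite_imageD by blast
    thus False by simp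
  qed
  then obtain N where N: "Delta 1 \<delta> (D N) = D N" using DS by metis
  have least: "D n s t \<le> d' s t" if "pum d'" "Delta 1 \<delta> d' = d'" for d' n s t
    using that
  proof (induction n arbitrary: s t)
    case 0 thus ?case using pumD(1) by (simp add: D0)
  next
    case (Suc n)
    have "Delta 1 \<delta> (D n) s t \<le> Delta 1 \<delta> d' s t"
      using Delta_mono[OF f] inv Suc by blast
    thus ?case using Suc.prems by (simp add: DS)
  qed
  have ilf: "is_least_fix 1 \<delta> (D N)"
    unfolding is_least_fix_def using inv N least by blast
  have "dfix 1 \<delta> = D N" unfolding dfix_def
  proof (rule the_equality[where P="is_least_fix 1 \<delta>", OF ilf])
    fix d assume "is_least_fix 1 \<delta> d"
    hence "\<forall>s t. d s t \<le> D N s t" "\<forall>s t. D N s t \<le> d s t"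
      using ilf unfolding is_least_fix_def by blast+
    thus "d = D N" by (intro ext) (simp add: order_antisym)
  qed
  thus ?thesis using inv T_def by simp
qed

end
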